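(* Let $\Xi=\{(x_1,x_2)\in\mathbb{R}^2: x_1,x_2\ge 0,\ x_1+x_2\le 1\}$, write $x_0=1-x_1-x_2$, and for $\beta>0$ let $$F_\beta(x_1,x_2)\;=\;-\frac12\Big|\sum_{k=0}^2 x_k\mathbf{v}_k\Big|^2+\frac1\beta\sum_{k=0}^2 x_k\log(3x_k),$$ where $\mathbf{v}_k=(\cos(2\pi k/3),\sin(2\pi k/3))$. Let $\mathbf{p}=(1/3,1/3)$. Then $\mathbf{p}$ is a critical point of $F_\beta$ for every $\beta>0$; it is a local minimum of $F_\beta$ for $\beta<\beta_1:=2$, and a local maximum of $F_\beta$ for $\beta>2$.
   Context: Convention: $0\log 0=0$. Equivalently $F_\beta(\mathbf{x})=\frac14-\frac34\sum_{k=0}^2x_k^2+\frac1\beta\sum_{k=0}^2x_k\log(3x_k)$. *)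

theory Defs
  imports "HOL-Analysis.Analysis"
begin

definition Xi :: "(real \<times> real) set" where
  "Xi = {(x1, x2). x1 \<ge> 0 \<and> x2 \<ge> 0 \<and> x1 + x2 \<le> 1}"

definition xlog3x :: "real \<Rightarrow> real" where
  "xlog3x t = (if t = 0 then 0 else t * ln (3 * t))"

definition bary :: "real \<times> real \<Rightarrow> nat \<Rightarrow> real" where
  "bary x k = (if k = 0 then 1 - fst x - snd x else if k = 1 then fst x else snd x)"

definition vk :: "nat \<Rightarrow> real \<times> real" where
  "vk k = (cos (2 * pi * real k / 3), sin (2 * pi * real k / 3))"

definition Fbeta :: "real \<Rightarrow> real \<times> real \<Rightarrow> real" where
  "Fbeta \<beta> x = - (1/2) * (norm (\<Sum>k<3. bary x k *\<^sub>R vk k))\<^sup>2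
                 + (1 / \<beta>) * (\<Sum>k<3. xlog3x (bary x k))"

definition pcen :: "real \<times> real" where "pcen = (1/3, 1/3)"

end

theory Submission
  imports Defs
begin

lemma cos240: "cos (2 * pi * 2 / 3) = -1/2" and sin240: "sin (2 * pi * 2 / 3) = - sqrt 3 / 2"
proof -
  have e: "2 * pi * 2 / 3 = pi / 3 + pi" by simp
  have c: "cos (pi / 3 + pi) = -1/2" by (subst cos_add) (simp add: cos_60)
  have d: "sin (pi / 3 + pi) = - sqrt 3 / 2" by (subst sin_add) (simp add: sin_60)
  show "cos (2 * pi * 2 / 3) = -1/2" using c by (simp only: e)
  show "sin (2 * pi * 2 / 3) = - sqrt 3 / 2" using d by (simp only: e)
qed

lemma cos240': "cos (4 * pi / 3) = -1/2" and sin240': "sin (4 * pi / 3) = - sqrt 3 / 2"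
  using cos240 sin240 by simp_all

lemma Fbeta_eq: "Fbeta \<beta> (a, b) = 1/4 - 3/4*((1-a-b)^2 + a^2 + b^2)
   + (1/\<beta>)*(xlog3x (1-a-b) + xlog3x a + xlog3x b)"
proof -
  have s3: "\<And>f::nat\<Rightarrow>'a::comm_monoid_add. (\<Sum>k<3. f k) = f 0 + f 1 + f 2"
    by (simp add: numeral_3_eq_3 numeral_2_eq_2 lessThan_Suc add.commute add.left_commute)
  have v1: "vk 1 = (-1/2, sqrt 3/2)" by (simp add: vk_def cos_120 sin_120)
  have v2: "vk 2 = (-1/2, - sqrt 3/2)" by (simp add: vk_def cos240' sin240')
  have v0: "vk 0 = (1, 0)" by (simp add: vk_def)
  have n: "(norm (\<Sum>k<3. bary (a,b) k *\<^sub>R vk k))\<^sup>2 = (3/2)*((1-a-b)^2 + a^2 + b^2) - 1/2"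
  proof -
    have np: "\<And>u v::real. (norm (u, v))\<^sup>2 = u\<^sup>2 + v\<^sup>2" by (simp add: norm_Pair)
    have "(\<Sum>k<3. bary (a,b) k *\<^sub>R vk k) = (1 - a - b - a/2 - b/2, sqrt 3/2 * (a - b))"
      unfolding s3 v0 v1 v2 by (simp add: bary_def algebra_simps)
    then have "(norm (\<Sum>k<3. bary (a,b) k *\<^sub>R vk k))\<^sup>2 = (1 - a - b - a/2 - b/2)^2 + (sqrt 3/2 * (a - b))^2"
      by (simp only: np)
    also have "\<dots> = (3/2)*((1-a-b)^2 + a^2 + b^2) - 1/2"
      by (simp add: power2_eq_square algebra_simps) (simp add: field_simps)
    finally show ?thesis .
  qed
  show ?thesis unfolding Fbeta_def n by (simp add: s3 bary_def algebra_simps)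
qed

lemma taylor_xlog:
  fixes t :: real assumes t: "t > 0"
  shows "\<exists>s. s > 0 \<and> min t (1/3) \<le> s \<and> s \<le> max t (1/3) \<and>
             t * ln (3 * t) = (t - 1/3) + (t - 1/3)^2 / (2 * s)"
proof (cases "t = 1/3")
  case True thus ?thesis by (intro exI[of _ "1/3"]) (simp add: True)
next
  case False
  define diff :: "nat \<Rightarrow> real \<Rightarrow> real" where
    "diff = (\<lambda>m. if m = 0 then (\<lambda>u. u * ln (3 * u)) else if m = 1 then (\<lambda>u. ln (3 * u) + 1) else (\<lambda>u. 1/u))"
  have D: "\<forall>m u. m < 2 \<and> min t (1/3) \<le> u \<and> u \<le> max t (1/3) \<longrightarrow> DERIV (diff m) u :> diff (Suc m) u"
  proof (intro allI impI)
    fix m :: nat and u :: real assume h: "m < 2 \<and> min t (1/3) \<le> u \<and> u \<le> max t (1/3)"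
    then have u: "u > 0" using t by (auto simp: min_def split: if_splits)
    show "DERIV (diff m) u :> diff (Suc m) u"
    proof (cases "m = 0")
      case True
      have "DERIV (\<lambda>u. u * ln (3 * u)) u :> 1 * ln (3 * u) + u * (3 / (3 * u))"
        by (rule derivative_eq_intros | use u in simp)+
      then show ?thesis using True u by (simp add: diff_def)
    next
      case False
      then have m: "m = 1" using h by auto
      have "DERIV (\<lambda>u. ln (3 * u) + 1) u :> 3 / (3 * u) + 0"
        by (rule derivative_eq_intros | use u in simp)+
      then show ?thesis using m u by (simp add: diff_def)
    qed
  qed
  have ex: "\<exists>s. (if t < 1/3 then t < s \<and> s < 1/3 else 1/3 < s \<and> s < t) \<and>
     t * ln (3 * t) = (\<Sum>m<2. (diff m (1/3) / fact m) * (t - 1/3)^m) + (diff 2 s / fact 2) * (t - 1/3)^2"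
    by (rule Taylor[of 2 diff "\<lambda>u. u * ln (3 * u)" "min t (1/3)" "max t (1/3)" "1/3" t, OF _ _ D])
       (use False in \<open>auto simp: diff_def\<close>)
  obtain s where s: "(if t < 1/3 then t < s \<and> s < 1/3 else 1/3 < s \<and> s < t)"
     and eq: "t * ln (3 * t) = (\<Sum>m<2. (diff m (1/3) / fact m) * (t - 1/3)^m) + (diff 2 s / fact 2) * (t - 1/3)^2"
    using ex by blast
  have "s > 0" using s t by (auto split: if_splits)
  moreover have "t * ln (3 * t) = (t - 1/3) + (t - 1/3)^2 / (2 * s)"
    using eq by (simp add: diff_def numeral_2_eq_2)
  ultimately show ?thesis using s by (intro exI[of _ s]) (auto split: if_splits)
qed


lemma Fp0: "Fbeta \<beta> pcen = 0"
  unfolding pcen_def Fbeta_eq by (simp add: xlog3x_def power2_eq_square)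

lemma termL: assumes "(\<beta>::real) > 0" "s > 0" "6 * \<beta> * s \<le> 4"
  shows "3/4 * y^2 \<le> (1/\<beta>) * (y^2 / (2 * s))"
proof -
  have "(1/\<beta>) * (y^2 / (2 * s)) = y^2 * (1 / (2 * \<beta> * s))" by (simp add: field_simps)
  moreover have "3/4 \<le> 1 / (2 * \<beta> * s)" using assms by (simp add: field_simps)
  ultimately show ?thesis by (metis mult.commute mult_left_mono zero_le_power2)
qed

lemma termG: assumes "(\<beta>::real) > 0" "s > 0" "6 * \<beta> * s \<ge> 4"
  shows "3/4 * y^2 \<ge> (1/\<beta>) * (y^2 / (2 * s))"
proof -
  have "(1/\<beta>) * (y^2 / (2 * s)) = y^2 * (1 / (2 * \<beta> * s))" by (simp add: field_simps)
  moreover have "3/4 \<ge> 1 / (2 * \<beta> * s)" using assms by (simp add: field_simps)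
  ultimately show ?thesis by (metis mult.commute mult_left_mono zero_le_power2)
qed

lemma local_expansion:
  assumes e: "e \<le> 1/12" and d: "dist (a,b) pcen < e"
  shows "\<exists>sa sb sc. sa > 0 \<and> sb > 0 \<and> sc > 0 \<and>
     \<bar>sa - 1/3\<bar> < 2*e \<and> \<bar>sb - 1/3\<bar> < 2*e \<and> \<bar>sc - 1/3\<bar> < 2*e \<and>
     Fbeta \<beta> (a,b) = -3/4*((a-1/3)^2 + (b-1/3)^2 + (1-a-b-1/3)^2)
        + (1/\<beta>) * ((a-1/3)^2/(2 * sa) + (b-1/3)^2/(2 * sb) + (1-a-b-1/3)^2/(2 * sc))"
proof -
  have da: "\<bar>a - 1/3\<bar> < e" using dist_fst_le[of "(a,b)" pcen] d by (simp add: pcen_def dist_real_def)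
  have db: "\<bar>b - 1/3\<bar> < e" using dist_snd_le[of "(a,b)" pcen] d by (simp add: pcen_def dist_real_def)
  define c where "c = 1 - a - b"
  have dc: "\<bar>c - 1/3\<bar> < 2*e" using da db by (simp add: c_def abs_if split: if_splits)
  have pa: "a > 0" and pb: "b > 0" and pc: "c > 0" using da db dc e by (auto simp: abs_if split: if_splits)
  obtain sa where sa: "sa > 0" "min a (1/3) \<le> sa" "sa \<le> max a (1/3)"
     "a * ln (3*a) = (a - 1/3) + (a - 1/3)^2 / (2 * sa)" using taylor_xlog[OF pa] by blast
  obtain sb where sb: "sb > 0" "min b (1/3) \<le> sb" "sb \<le> max b (1/3)"
     "b * ln (3*b) = (b - 1/3) + (b - 1/3)^2 / (2 * sb)" using taylor_xlog[OF pb] by blast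
  obtain sc where sc: "sc > 0" "min c (1/3) \<le> sc" "sc \<le> max c (1/3)"
     "c * ln (3*c) = (c - 1/3) + (c - 1/3)^2 / (2 * sc)" using taylor_xlog[OF pc] by blast
  have "\<bar>sa - 1/3\<bar> < 2*e" using sa da e by (auto simp: abs_if min_def max_def split: if_splits)
  moreover have "\<bar>sb - 1/3\<bar> < 2*e" using sb db e by (auto simp: abs_if min_def max_def split: if_splits)
  moreover have "\<bar>sc - 1/3\<bar> < 2*e" using sc dc e by (auto simp: abs_if min_def max_def split: if_splits)
  moreover have "Fbeta \<beta> (a,b) = -3/4*((a-1/3)^2 + (b-1/3)^2 + (1-a-b-1/3)^2)
        + (1/\<beta>) * ((a-1/3)^2/(2 * sa) + (b-1/3)^2/(2 * sb) + (1-a-b-1/3)^2/(2 * sc))"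
  proof -
    have x: "xlog3x (1-a-b) + xlog3x a + xlog3x b =
       (a-1/3)^2/(2 * sa) + (b-1/3)^2/(2 * sb) + (1-a-b-1/3)^2/(2 * sc)"
      using sa(4) sb(4) sc(4) pa pb pc unfolding c_def by (simp add: xlog3x_def)
    have q: "1/4 - 3/4*((1-a-b)^2 + a^2 + b^2) = -3/4*((a-1/3)^2 + (b-1/3)^2 + (1-a-b-1/3)^2)"
      by (simp add: power2_eq_square algebra_simps)
    show ?thesis unfolding Fbeta_eq x q ..
  qed
  ultimately show ?thesis using sa sb sc by blast
qed


lemma deriv_part: assumes "\<beta> > 0" shows "(Fbeta \<beta> has_derivative (\<lambda>h. 0)) (at pcen)"
proof -
  define G where "G = (\<lambda>x::real\<times>real. 1/4 - 3/4*((1-fst x-snd x)^2 + fst x^2 + snd x^2)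
     + (1/\<beta>)*((1-fst x-snd x)*ln(3*(1-fst x-snd x)) + fst x*ln(3*fst x) + snd x*ln(3 * snd x)))"
  define S where "S = {x::real\<times>real. 0 < fst x \<and> 0 < snd x \<and> fst x + snd x < 1}"
  have oS: "open S" unfolding S_def
    by (intro open_Collect_conj open_Collect_less continuous_intros)
  have pS: "pcen \<in> S" by (simp add: S_def pcen_def)
  have eq: "G x = Fbeta \<beta> x" if "x \<in> S" for x
    using that by (cases x) (simp add: G_def S_def Fbeta_eq xlog3x_def)
  have "(G has_derivative (\<lambda>h. 0)) (at pcen)"
    unfolding G_def pcen_def
    using assms by (auto intro!: derivative_eq_intros simp: field_simps)
  then show ?thesis by (rule has_derivative_transform_within_open[OF _ oS pS eq])
qed


theorem lemma4p1:
  shows "(\<forall>\<beta>>0. (Fbeta \<beta> has_derivative (\<lambda>h. 0)) (at pcen))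
    \<and> (\<forall>\<beta>. 0 < \<beta> \<and> \<beta> < 2 \<longrightarrow>
          (\<exists>e>0. \<forall>x\<in>Xi. dist x pcen < e \<longrightarrow> Fbeta \<beta> pcen \<le> Fbeta \<beta> x))
    \<and> (\<forall>\<beta>>2.
          (\<exists>e>0. \<forall>x\<in>Xi. dist x pcen < e \<longrightarrow> Fbeta \<beta> x \<le> Fbeta \<beta> pcen))"
proof (intro conjI allI impI)
  fix \<beta> :: real assume "\<beta> > 0" then show "(Fbeta \<beta> has_derivative (\<lambda>h. 0)) (at pcen)"
    by (rule deriv_part)
next
  fix \<beta> :: real assume b: "0 < \<beta> \<and> \<beta> < 2"
  define e where "e = min (1/12) ((2/(3*\<beta>) - 1/3)/2)"
  have "2/(3*\<beta>) > 1/3" using b by (simp add: field_simps)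
  then have e0: "e > 0" by (simp add: e_def)
  show "\<exists>e>0. \<forall>x\<in>Xi. dist x pcen < e \<longrightarrow> Fbeta \<beta> pcen \<le> Fbeta \<beta> x"
  proof (intro exI[of _ e] conjI ballI impI e0)
    fix x assume "x \<in> Xi" and d: "dist x pcen < e"
    obtain a bb where x: "x = (a, bb)" by (cases x)
    have e12: "e \<le> 1/12" by (simp add: e_def)
    obtain sa sb sc where s: "sa > 0" "sb > 0" "sc > 0"
      "\<bar>sa - 1/3\<bar> < 2*e" "\<bar>sb - 1/3\<bar> < 2*e" "\<bar>sc - 1/3\<bar> < 2*e"
      and F: "Fbeta \<beta> (a,bb) = -3/4*((a-1/3)^2 + (bb-1/3)^2 + (1-a-bb-1/3)^2)
        + (1/\<beta>) * ((a-1/3)^2/(2 * sa) + (bb-1/3)^2/(2 * sb) + (1-a-bb-1/3)^2/(2 * sc))"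
      using local_expansion[OF e12 d[unfolded x], of \<beta>] by blast
    have bnd: "6 * \<beta> * s \<le> 4" if "\<bar>s - 1/3\<bar> < 2*e" for s
    proof -
      have el: "2*e \<le> 2/(3*\<beta>) - 1/3"
      proof -
        have "e \<le> (2/(3*\<beta>) - 1/3)/2" unfolding e_def by (rule min.cobounded2)
        then show ?thesis by (simp add: field_simps)
      qed
      have "s \<le> 2/(3*\<beta>)" using that el by (simp add: abs_less_iff)
      then show ?thesis using b by (simp add: field_simps)
    qed
    have "3/4 * (a-1/3)^2 \<le> (1/\<beta>) * ((a-1/3)^2/(2 * sa))" using termL b s bnd by blast
    moreover have "3/4 * (bb-1/3)^2 \<le> (1/\<beta>) * ((bb-1/3)^2/(2 * sb))" using termL b s bnd by blast
    moreover have "3/4 * (1-a-bb-1/3)^2 \<le> (1/\<beta>) * ((1-a-bb-1/3)^2/(2 * sc))" using termL b s bnd by blast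
    ultimately show "Fbeta \<beta> pcen \<le> Fbeta \<beta> x" unfolding x F Fp0 by (simp add: algebra_simps)
  qed
next
  fix \<beta> :: real assume b: "\<beta> > 2"
  define e where "e = min (1/12) ((1/3 - 2/(3*\<beta>))/2)"
  have "2/(3*\<beta>) < 1/3" using b by (simp add: field_simps)
  then have e0: "e > 0" by (simp add: e_def)
  show "\<exists>e>0. \<forall>x\<in>Xi. dist x pcen < e \<longrightarrow> Fbeta \<beta> x \<le> Fbeta \<beta> pcen"
  proof (intro exI[of _ e] conjI ballI impI e0)
    fix x assume "x \<in> Xi" and d: "dist x pcen < e"
    obtain a bb where x: "x = (a, bb)" by (cases x)
    have e12: "e \<le> 1/12" by (simp add: e_def)
    obtain sa sb sc where s: "sa > 0" "sb > 0" "sc > 0"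
      "\<bar>sa - 1/3\<bar> < 2*e" "\<bar>sb - 1/3\<bar> < 2*e" "\<bar>sc - 1/3\<bar> < 2*e"
      and F: "Fbeta \<beta> (a,bb) = -3/4*((a-1/3)^2 + (bb-1/3)^2 + (1-a-bb-1/3)^2)
        + (1/\<beta>) * ((a-1/3)^2/(2 * sa) + (bb-1/3)^2/(2 * sb) + (1-a-bb-1/3)^2/(2 * sc))"
      using local_expansion[OF e12 d[unfolded x], of \<beta>] by blast
    have b0: "\<beta> > 0" using b by simp
    have bnd: "6 * \<beta> * s \<ge> 4" if "\<bar>s - 1/3\<bar> < 2*e" for s
    proof -
      have el: "2*e \<le> 1/3 - 2/(3*\<beta>)"
      proof -
        have "e \<le> (1/3 - 2/(3*\<beta>))/2" unfolding e_def by (rule min.cobounded2)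
        then show ?thesis by (simp add: field_simps)
      qed
      have "s \<ge> 2/(3*\<beta>)" using that el by (simp add: abs_less_iff)
      then show ?thesis using b by (simp add: field_simps)
    qed
    have "3/4 * (a-1/3)^2 \<ge> (1/\<beta>) * ((a-1/3)^2/(2 * sa))" using termG b0 s bnd by blast
    moreover have "3/4 * (bb-1/3)^2 \<ge> (1/\<beta>) * ((bb-1/3)^2/(2 * sb))" using termG b0 s bnd by blast
    moreover have "3/4 * (1-a-bb-1/3)^2 \<ge> (1/\<beta>) * ((1-a-bb-1/3)^2/(2 * sc))" using termG b0 s bnd by blast
    ultimately show "Fbeta \<beta> x \<le> Fbeta \<beta> pcen" unfolding x F Fp0 by (simp add: algebra_simps)
  qed
qed

end
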